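(* Let $S,\alpha$ be real symmetric $n\times n$ matrices and let $V(t)$ be the matrix-valued solution of $\frac{dV}{dt}=[S,V]+\alpha$ with $V(0)=0$. Then $\mathrm{Tr}\,V(t)^2\ge t^2\,\mathrm{Tr}\,\alpha^2$ for all real $t$. *)

theory Defs
  imports "HOL-Analysis.Analysis"
begin

end

theory Submission
  imports Defs
begin

lemma mm_rdistrib: "((A::real^'n^'m) + B) ** (C::real^'p^'n) = A ** C + B ** C"
  by (vector matrix_matrix_mult_def sum.distrib[symmetric] field_simps)

lemma mm_ldiff: "(A::real^'n^'m) ** ((B::real^'p^'n) - C) = A ** B - A ** C"
  by (vector matrix_matrix_mult_def sum_subtractf[symmetric] field_simps)

lemma mm_rdiff: "((A::real^'n^'m) - B) ** (C::real^'p^'n) = A ** C - B ** C"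
  by (vector matrix_matrix_mult_def sum_subtractf[symmetric] field_simps)

lemma bl_left: "bounded_linear (\<lambda>M::real^'n^'n. S ** M)"
proof -
  have "linear (\<lambda>M::real^'n^'n. S ** M)"
    by (rule linearI) (simp_all add: matrix_add_ldistrib matrix_scalar_ac scalar_matrix_assoc)
  then show ?thesis using linear_conv_bounded_linear by blast
qed

lemma bl_right: "bounded_linear (\<lambda>M::real^'n^'n. M ** S)"
proof -
  have "linear (\<lambda>M::real^'n^'n. M ** S)"
    by (rule linearI) (simp_all add: mm_rdistrib scalar_matrix_assoc)
  then show ?thesis using linear_conv_bounded_linear by blast
qed

lemma bl_transpose: "bounded_linear (\<lambda>M::real^'n^'n. transpose M)"
proof -
  have "linear (\<lambda>M::real^'n^'n. transpose M)"
    by (rule linearI) (simp_all add: transpose_def vec_eq_iff)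
  then show ?thesis using linear_conv_bounded_linear by blast
qed

lemma comp_deriv:
  fixes X :: "real \<Rightarrow> real^'n^'m"
  assumes "(X has_vector_derivative X') F"
  shows "((\<lambda>s. X s $ i $ k) has_real_derivative X' $ i $ k) F"
proof -
  have bl: "bounded_linear (\<lambda>M::real^'n^'m. M $ i $ k)"
    by (rule bounded_linear_compose[OF bounded_linear_vec_nth bounded_linear_vec_nth])
  show ?thesis
    using bounded_linear.has_vector_derivative[OF bl assms]
    by (simp add: has_real_derivative_iff_has_vector_derivative)
qed

lemma trace_deriv:
  fixes X Z :: "real \<Rightarrow> real^'n^'n"
  assumes "(X has_vector_derivative X') (at t)" "(Z has_vector_derivative Z') (at t)"
  shows "((\<lambda>s. trace (X s ** Z s)) has_real_derivative
           trace (X' ** Z t) + trace (X t ** Z')) (at t)"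
proof -
  have "((\<lambda>s. \<Sum>i\<in>UNIV. \<Sum>k\<in>UNIV. X s $ i $ k * Z s $ k $ i) has_real_derivative
          (\<Sum>i\<in>UNIV. \<Sum>k\<in>UNIV. X t $ i $ k * Z' $ k $ i + X' $ i $ k * Z t $ k $ i)) (at t)"
    by (intro DERIV_sum DERIV_mult' comp_deriv assms)
  then show ?thesis
    by (simp add: trace_def matrix_matrix_mult_def sum.distrib add.commute)
qed

lemma conserv:
  fixes X Z :: "real \<Rightarrow> real^'n^'n"
  assumes "\<And>r. (X has_vector_derivative (S ** X r - X r ** S)) (at r)"
    and "\<And>r. (Z has_vector_derivative (S ** Z r - Z r ** S)) (at r)"
  shows "trace (X a ** Z a) = trace (X b ** Z b)"
proof -
  have "\<forall>r. ((\<lambda>s. trace (X s ** Z s)) has_real_derivative 0) (at r)"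
  proof
    fix r
    have e: "trace ((S ** X r - X r ** S) ** Z r) + trace (X r ** (S ** Z r - Z r ** S)) = 0"
      by (simp add: mm_rdiff mm_ldiff trace_sub matrix_mul_assoc)
         (metis trace_mul_sym matrix_mul_assoc)
    show "((\<lambda>s. trace (X s ** Z s)) has_real_derivative 0) (at r)"
      using trace_deriv[OF assms(1)[of r] assms(2)[of r]] e by simp
  qed
  then show ?thesis by (rule DERIV_isconst_all)
qed

lemma trace_sq_le: "trace ((M::real^'n^'n) ** M) \<le> trace (M ** transpose M)"
proof -
  have "0 \<le> (\<Sum>i\<in>UNIV. \<Sum>k\<in>UNIV. (M$i$k - M$k$i)^2)"
    by (intro sum_nonneg) auto
  also have "\<dots> = (\<Sum>i\<in>UNIV. \<Sum>k\<in>UNIV. (M$i$k)^2) + (\<Sum>i\<in>UNIV. \<Sum>k\<in>UNIV. (M$k$i)^2)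
      - 2 * (\<Sum>i\<in>UNIV. \<Sum>k\<in>UNIV. M$i$k * M$k$i)"
    by (simp add: power2_eq_square algebra_simps sum.distrib sum_subtractf sum_distrib_left)
  also have "(\<Sum>i\<in>UNIV. \<Sum>k\<in>UNIV. (M$k$i)^2) = (\<Sum>i\<in>UNIV. \<Sum>k\<in>UNIV. (M$i$k)^2)"
    by (rule sum.swap)
  finally show ?thesis
    by (simp add: trace_def matrix_matrix_mult_def transpose_def power2_eq_square)
qed

theorem lemma9:
  fixes S \<alpha> :: "real^'n^'n" and V :: "real \<Rightarrow> real^'n^'n"
  assumes "transpose S = S" and "transpose \<alpha> = \<alpha>"
    and "\<And>t. (V has_vector_derivative (S ** V t - V t ** S + \<alpha>)) (at t)"
    and "V 0 = 0"
  shows "\<forall>t. trace (V t ** V t) \<ge> t\<^sup>2 * trace (\<alpha> ** \<alpha>)"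
proof
  fix T :: real
  define W where "W t = S ** V t - V t ** S + \<alpha>" for t
  define K where "K = trace (\<alpha> ** \<alpha>)"
  have dV: "(V has_vector_derivative W t) (at t)" for t
    using assms(3) W_def by simp
  have dW: "(W has_vector_derivative (S ** W t - W t ** S)) (at t)" for t
  proof -
    have "(W has_vector_derivative (S ** W t - W t ** S + 0)) (at t)"
      unfolding W_def[abs_def]
      by (intro has_vector_derivative_add has_vector_derivative_diff has_vector_derivative_const
          bounded_linear.has_vector_derivative[OF bl_left dV, unfolded W_def]
          bounded_linear.has_vector_derivative[OF bl_right dV, unfolded W_def])
    then show ?thesis by simp
  qed
  have W0: "W 0 = \<alpha>" using assms(4) W_def by simp
  have WW: "trace (W r ** W r) = K" for r
    using conserv[of W S W, OF dW dW, of r 0] W0 K_def by simp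
  have c_ge: "trace (\<alpha> ** W t) \<ge> K" for t
  proof -
    define Z where "Z r = transpose (W (t - r))" for r
    have dZ: "(Z has_vector_derivative (S ** Z r - Z r ** S)) (at r)" for r
    proof -
      have d1: "((\<lambda>r. t - r) has_vector_derivative -1) (at r)"
        using has_vector_derivative_diff[OF has_vector_derivative_const has_vector_derivative_id]
        by simp
      have "((W \<circ> (\<lambda>r. t - r)) has_vector_derivative (-1) *\<^sub>R (S ** W (t-r) - W (t-r) ** S)) (at r)"
        by (rule vector_diff_chain_at[OF d1]) (simp add: dW)
      from bounded_linear.has_vector_derivative[OF bl_transpose this]
      have "(Z has_vector_derivative transpose ((-1) *\<^sub>R (S ** W (t-r) - W (t-r) ** S))) (at r)"
        by (simp add: Z_def[abs_def] o_def)
      moreover have "transpose ((-1) *\<^sub>R (S ** W (t-r) - W (t-r) ** S)) = S ** Z r - Z r ** S"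
      proof -
        have td: "transpose (A - B) = transpose A - transpose (B::real^'n^'n)" for A B
          by (simp add: vec_eq_iff transpose_def)
        show ?thesis
          using assms(1) unfolding Z_def
          by (simp add: transpose_scalar td matrix_transpose_mul)
      qed
      ultimately show ?thesis by simp
    qed
    have "trace (W 0 ** Z 0) = trace (W (t/2) ** Z (t/2))"
      by (rule conserv[of W S Z, OF dW dZ])
    moreover have "Z (t/2) = transpose (W (t/2))" unfolding Z_def by simp
    moreover have "trace (W 0 ** Z 0) = trace (\<alpha> ** W t)"
    proof -
      have "trace (\<alpha> ** transpose (W t)) = trace (transpose (\<alpha> ** transpose (W t)))"
        by (simp add: trace_def transpose_def)
      also have "\<dots> = trace (W t ** \<alpha>)" using assms(2) by (simp add: matrix_transpose_mul)
      also have "\<dots> = trace (\<alpha> ** W t)" by (rule trace_mul_sym)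
      finally show ?thesis using W0 Z_def by simp
    qed
    ultimately show ?thesis using trace_sq_le[of "W (t/2)"] WW[of "t/2"] by simp
  qed
  define h where "h t = trace (V t ** W t) - t * K" for t
  have dh: "(h has_real_derivative (trace (\<alpha> ** W t) - K)) (at t)" for t
  proof -
    have e: "trace (W t ** W t) + trace (V t ** (S ** W t - W t ** S)) = trace (\<alpha> ** W t)"
    proof -
      have "trace (V t ** (S ** W t - W t ** S)) = trace ((V t ** S - S ** V t) ** W t)"
        by (simp add: mm_rdiff mm_ldiff trace_sub matrix_mul_assoc)
           (metis trace_mul_sym matrix_mul_assoc)
      also have "V t ** S - S ** V t = \<alpha> - W t" using W_def by simp
      finally show ?thesis by (simp add: mm_rdiff trace_sub)
    qed
    have "(h has_real_derivative (trace (W t ** W t) + trace (V t ** (S ** W t - W t ** S)) - K)) (at t)"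
      unfolding h_def[abs_def]
      by (rule derivative_eq_intros trace_deriv[OF dV dW] | simp)+
    then show ?thesis using e by simp
  qed
  have h0: "h 0 = 0" using assms(4) h_def trace_0 by simp
  have hpos: "h t \<ge> 0" if "t \<ge> 0" for t
    using DERIV_nonneg_imp_nondecreasing[of 0 t h] dh c_ge that h0 by fastforce
  have hneg: "h t \<le> 0" if "t \<le> 0" for t
    using DERIV_nonneg_imp_nondecreasing[of t 0 h] dh c_ge that h0 by fastforce
  define g where "g t = trace (V t ** V t) - t^2 * K" for t
  have dg: "(g has_real_derivative 2 * h t) (at t)" for t
  proof -
    have "(g has_real_derivative (trace (W t ** V t) + trace (V t ** W t) - 2 * t * K)) (at t)"
      unfolding g_def[abs_def]
      by (rule derivative_eq_intros trace_deriv[OF dV dV] | simp)+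
    then show ?thesis using trace_mul_sym[of "W t" "V t"] by (simp add: h_def algebra_simps)
  qed
  have g0: "g 0 = 0" using assms(4) g_def trace_0 by simp
  have "g T \<ge> 0"
  proof (cases "T \<ge> 0")
    case True
    then show ?thesis
      using DERIV_nonneg_imp_nondecreasing[of 0 T g] dg hpos g0 by fastforce
  next
    case False
    then show ?thesis
      using DERIV_nonpos_imp_nonincreasing[of T 0 g] dg hneg g0 by fastforce
  qed
  then show "trace (V T ** V T) \<ge> T\<^sup>2 * trace (\<alpha> ** \<alpha>)"
    using g_def K_def by simp
qed

end
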